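(* Let $k,l\ge m>1$ be integers. There exist mutually unbiased equiangular tight frames $(v_1,\dots,v_k)$ and $(w_1,\dots,w_l)$ for $\mathbb{R}^m$ if and only if there exists a matrix $X\in\mathbb{R}^{k\times l}$ such that: (i) $X_{ij}\in\{-1,+1\}$ for all $i,j$; (ii) $XX^\top X=aX$ for some $a\in\mathbb{R}$; (iii) $|XX^\top|_{i,i'}$ is constant over all $i\neq i'$; (iv) $|X^\top X|_{j,j'}$ is constant over all $j\ne j'$; (v) $X$ has rank $m$. Moreover, when this occurs, the quantities $$\frac{kl}{m},\qquad k\sqrt{\frac{l-m}{m(l-1)}},\qquad l\sqrt{\frac{k-m}{m(k-1)}}$$ are all integers.
   Context: A system of unit vectors $(v_1,\dots,v_n)$ in $\mathbb{R}^m$ is an equiangular tight frame if $|\langle v_i,v_j\rangle|$ is the same constant for all $i\ne j$ and $VV^\top=\frac{n}{m}\mathrm{I}_m$, where $V$ has columns $v_i$. Two equiangular tight frames $(v_1,\dots,v_k)$, $(w_1,\dots,w_l)$ for $\mathbb{R}^m$ are mutually unbiased if there is $c\in\mathbb{R}$ with $|\langle v_i,w_j\rangle|=c$ for all $i,j$. $|A|$ denotes the entrywise absolute value of a matrix $A$. *)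

theory Defs
  imports "HOL-Analysis.Analysis"
begin

definition synth :: "('n::finite \<Rightarrow> real^'m::finite) \<Rightarrow> real^'n^'m" where
  "synth v = (\<chi> a i. v i $ a)"

definition is_ETF :: "('n::finite \<Rightarrow> real^'m::finite) \<Rightarrow> bool" where
  "is_ETF v \<longleftrightarrow>
     (\<forall>i. norm (v i) = 1) \<and>
     (\<exists>c. \<forall>i j. i \<noteq> j \<longrightarrow> \<bar>v i \<bullet> v j\<bar> = c) \<and>
     synth v ** transpose (synth v) = (real CARD('n) / real CARD('m)) *\<^sub>R mat 1"

definition mutually_unbiased :: "('k \<Rightarrow> real^'m::finite) \<Rightarrow> ('l \<Rightarrow> real^'m) \<Rightarrow> bool" where
  "mutually_unbiased v w \<longleftrightarrow> (\<exists>c. \<forall>i j. \<bar>v i \<bullet> w j\<bar> = c)"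

end

theory Submission imports Defs begin


lemma gram_entry: "(transpose (synth v) ** synth w) $ i $ j = v i \<bullet> w j"
  by (simp add: synth_def matrix_matrix_mult_def transpose_def inner_vec_def)

lemma outer_entry: "(synth v ** transpose (synth v)) $ a $ b = (\<Sum>i\<in>UNIV. v i $ a * v i $ b)"
  by (simp add: synth_def matrix_matrix_mult_def transpose_def)

lemma smult_left: "((c::real) *\<^sub>R A) ** B = c *\<^sub>R (A ** (B::real^_^_))"
  by (simp add: scalar_matrix_assoc)

lemma smult_right: "(A::real^_^_) ** ((c::real) *\<^sub>R B) = c *\<^sub>R (A ** B)"
  by (simp add: matrix_scalar_ac scalar_matrix_assoc)

lemma rank_scaleR:
  fixes A :: "real^'n^'m"
  assumes "c \<noteq> 0" shows "rank (c *\<^sub>R A) = rank A"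
proof -
  have "c *\<^sub>R A = (c *\<^sub>R mat 1) ** A" by (simp add: smult_left)
  hence 1: "rank (c *\<^sub>R A) \<le> rank A" by (metis rank_mul_le_right)
  have "A = (inverse c *\<^sub>R mat 1) ** (c *\<^sub>R A)" using assms by (simp add: smult_left smult_right)
  hence "rank A \<le> rank (c *\<^sub>R A)" by (metis rank_mul_le_right)
  with 1 show ?thesis by simp
qed

lemma trace_lemma:
  fixes v :: "'k::finite \<Rightarrow> real^'m::finite"
  assumes "synth v ** transpose (synth v) = c *\<^sub>R mat 1" "\<And>i. norm (v i) = 1"
  shows "real CARD('k) = c * real CARD('m)"
proof -
  have "(\<Sum>a\<in>UNIV. (synth v ** transpose (synth v)) $ a $ a) = (\<Sum>a\<in>(UNIV::'m set). c)"
    using assms(1) by (simp add: mat_def)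
  also have "\<dots> = c * real CARD('m)" by simp
  finally have 1: "(\<Sum>a\<in>UNIV. (synth v ** transpose (synth v)) $ a $ a) = c * real CARD('m)" .
  have "(\<Sum>a\<in>UNIV. (synth v ** transpose (synth v)) $ a $ a) = (\<Sum>a\<in>UNIV. \<Sum>i\<in>UNIV. v i $ a * v i $ a)"
    by (simp add: outer_entry)
  also have "\<dots> = (\<Sum>i\<in>UNIV. \<Sum>a\<in>UNIV. v i $ a * v i $ a)" by (rule sum.swap)
  also have "\<dots> = (\<Sum>i\<in>(UNIV::'k set). v i \<bullet> v i)" by (simp add: inner_vec_def)
  also have "\<dots> = (\<Sum>i\<in>(UNIV::'k set). 1)" using assms(2) by (simp add: dot_square_norm)
  finally show ?thesis using 1 by simp
qed

lemma tight_lemma: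
  fixes v :: "'k::finite \<Rightarrow> real^'m::finite"
  assumes "\<And>y. (\<Sum>i\<in>UNIV. (v i \<bullet> y) *\<^sub>R v i) = c *\<^sub>R y"
  shows "synth v ** transpose (synth v) = c *\<^sub>R mat 1"
proof -
  have "(synth v ** transpose (synth v)) $ a $ b = (c *\<^sub>R mat 1 :: real^'m^'m) $ a $ b" for a b
  proof -
    have "(synth v ** transpose (synth v)) $ a $ b = (\<Sum>i\<in>UNIV. (v i \<bullet> axis b 1) *\<^sub>R v i) $ a"
      by (simp add: outer_entry inner_axis mult.commute)
    also have "\<dots> = (c *\<^sub>R mat 1 :: real^'m^'m) $ a $ b" using assms[of "axis b 1"]
      by (simp add: mat_def axis_def)
    finally show ?thesis .
  qed
  then show ?thesis by (simp add: vec_eq_iff)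
qed

lemma mm_entry: "(A ** B) $ i $ j = (\<Sum>k\<in>UNIV. A $ i $ k * B $ k $ j)"
  by (simp add: matrix_matrix_mult_def)

lemma tr_entry: "transpose A $ i $ j = A $ j $ i"
  by (simp add: transpose_def)

lemma gram_sq:
  fixes v :: "'k::finite \<Rightarrow> real^'m::finite"
  assumes "synth v ** transpose (synth v) = c *\<^sub>R mat 1"
  shows "(transpose (synth v) ** synth w) ** transpose (transpose (synth v) ** synth w)
         = transpose (synth v) ** (synth w ** transpose (synth w)) ** synth v"
  by (simp add: matrix_transpose_mul matrix_mul_assoc)

lemma welch:
  fixes v :: "'k::finite \<Rightarrow> real^'m::finite"
  assumes "is_ETF v" "i \<noteq> j"
  shows "\<bar>v i \<bullet> v j\<bar> = sqrt ((real CARD('k) - real CARD('m)) / (real CARD('m) * (real CARD('k) - 1)))"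
proof -
  let ?V = "synth v" let ?k = "real CARD('k)" let ?m = "real CARD('m)"
  from assms obtain c where n: "\<And>i. norm (v i) = 1" and c: "\<And>i j. i \<noteq> j \<Longrightarrow> \<bar>v i \<bullet> v j\<bar> = c"
    and T: "?V ** transpose ?V = (?k / ?m) *\<^sub>R mat 1" unfolding is_ETF_def by blast
  have vv: "v x \<bullet> v x = 1" for x using n by (simp add: dot_square_norm)
  have "(transpose ?V ** ?V) ** (transpose ?V ** ?V) = transpose ?V ** (?V ** transpose ?V) ** ?V"
    by (simp add: matrix_mul_assoc)
  also have "\<dots> = (?k / ?m) *\<^sub>R (transpose ?V ** ?V)" by (simp add: T smult_left smult_right)
  finally have G: "(transpose ?V ** ?V) ** (transpose ?V ** ?V) = (?k / ?m) *\<^sub>R (transpose ?V ** ?V)" .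
  have "((transpose ?V ** ?V) ** (transpose ?V ** ?V)) $ i $ i = (\<Sum>x\<in>UNIV. (v i \<bullet> v x) * (v x \<bullet> v i))"
    by (subst mm_entry) (simp add: gram_entry)
  also have "\<dots> = (\<Sum>x\<in>UNIV. (v i \<bullet> v x)^2)" by (simp add: inner_commute power2_eq_square)
  also have "\<dots> = (v i \<bullet> v i)^2 + (\<Sum>x\<in>UNIV - {i}. (v i \<bullet> v x)^2)"
    by (simp add: sum.remove)
  also have "\<dots> = 1 + (\<Sum>x\<in>UNIV - {i}. c^2)"
  proof -
    have "(\<Sum>x\<in>UNIV - {i}. (v i \<bullet> v x)^2) = (\<Sum>x\<in>UNIV - {i}. c^2)"
    proof (rule sum.cong)
      fix x assume "x \<in> UNIV - {i}"
      hence "\<bar>v i \<bullet> v x\<bar> = c" using c by auto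
      thus "(v i \<bullet> v x)^2 = c^2" by (metis power2_abs)
    qed simp
    thus ?thesis by (simp add: vv)
  qed
  also have "\<dots> = 1 + (?k - 1) * c^2" by (simp add: card_Diff_singleton)
  finally have 1: "((transpose ?V ** ?V) ** (transpose ?V ** ?V)) $ i $ i = 1 + (?k - 1) * c^2" .
  have 2: "((transpose ?V ** ?V) ** (transpose ?V ** ?V)) $ i $ i = ?k / ?m"
    by (simp add: G gram_entry vv)
  have k1: "?k > 1"
  proof -
    have "card {i, j} \<le> CARD('k)" by (rule card_mono) auto
    with assms(2) show ?thesis by simp
  qed
  have "c^2 = (?k - ?m) / (?m * (?k - 1))"
    using 1 2 k1 by (simp add: field_simps)
  moreover have "c \<ge> 0" using c[OF assms(2)] by (metis abs_ge_zero)
  ultimately show ?thesis using c[OF assms(2)] by (metis real_sqrt_abs abs_of_nonneg)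
qed

lemma forward:
  fixes v :: "'k::finite \<Rightarrow> real^'m::finite" and w :: "'l::finite \<Rightarrow> real^'m"
  assumes ev: "is_ETF v" and ew: "is_ETF w" and mu: "mutually_unbiased v w"
  defines "X \<equiv> sqrt (real CARD('m)) *\<^sub>R (transpose (synth v) ** synth w)"
  shows "(\<forall>i j. X $ i $ j = 1 \<or> X $ i $ j = -1)"
    and "X ** transpose X ** X = (real CARD('k) * real CARD('l) / real CARD('m)) *\<^sub>R X"
    and "X ** transpose X = real CARD('l) *\<^sub>R (transpose (synth v) ** synth v)"
    and "transpose X ** X = real CARD('k) *\<^sub>R (transpose (synth w) ** synth w)"
    and "rank X = CARD('m)"
proof -
  let ?V = "synth v" let ?W = "synth w" let ?D = "transpose ?V ** ?W"
  let ?k = "real CARD('k)" let ?l = "real CARD('l)" let ?m = "real CARD('m)"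
  have m0: "?m > 0" by simp
  from ev have TV: "?V ** transpose ?V = (?k / ?m) *\<^sub>R mat 1" and nv: "\<And>i. norm (v i) = 1"
    unfolding is_ETF_def by blast+
  from ew have TW: "?W ** transpose ?W = (?l / ?m) *\<^sub>R mat 1" and nw: "\<And>i. norm (w i) = 1"
    unfolding is_ETF_def by blast+
  from mu obtain c where c: "\<And>i j. \<bar>v i \<bullet> w j\<bar> = c" unfolding mutually_unbiased_def by blast
  have DDt: "?D ** transpose ?D = (?l / ?m) *\<^sub>R (transpose ?V ** ?V)"
  proof -
    have "?D ** transpose ?D = transpose ?V ** (?W ** transpose ?W) ** ?V"
      by (simp add: matrix_transpose_mul matrix_mul_assoc)
    thus ?thesis by (simp add: TW smult_left smult_right)
  qed
  have DtD: "transpose ?D ** ?D = (?k / ?m) *\<^sub>R (transpose ?W ** ?W)"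
  proof -
    have "transpose ?D ** ?D = transpose ?W ** (?V ** transpose ?V) ** ?W"
      by (simp add: matrix_transpose_mul matrix_mul_assoc)
    thus ?thesis by (simp add: TV smult_left smult_right)
  qed
  have DDD: "?D ** transpose ?D ** ?D = (?l / ?m * (?k / ?m)) *\<^sub>R ?D"
  proof -
    have "?D ** transpose ?D ** ?D = (?l / ?m) *\<^sub>R (transpose ?V ** (?V ** transpose ?V) ** ?W)"
      by (simp add: DDt smult_left matrix_mul_assoc)
    thus ?thesis by (simp add: TV smult_left smult_right)
  qed
  have cc: "c^2 = 1 / ?m"
  proof -
    obtain j :: 'l where True by blast
    have "(transpose ?D ** ?D) $ j $ j = (\<Sum>i\<in>UNIV. (v i \<bullet> w j)^2)"
      by (subst mm_entry) (simp add: tr_entry gram_entry power2_eq_square)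
    also have "\<dots> = (\<Sum>i\<in>(UNIV::'k set). c^2)" using c by (metis power2_abs)
    finally have 1: "(transpose ?D ** ?D) $ j $ j = ?k * c^2" by simp
    have "(transpose ?D ** ?D) $ j $ j = ?k / ?m * (w j \<bullet> w j)" by (simp add: DtD gram_entry)
    also have "\<dots> = ?k / ?m" using nw by (simp add: dot_square_norm)
    finally show ?thesis using 1 by (simp add: field_simps)
  qed
  have sm2: "sqrt ?m * (sqrt ?m * x) = ?m * x" for x
    by (simp add: mult.assoc[symmetric])
  have Xe: "X $ i $ j = sqrt ?m * (v i \<bullet> w j)" for i j by (simp add: X_def gram_entry)
  show "\<forall>i j. X $ i $ j = 1 \<or> X $ i $ j = -1"
  proof (intro allI)
    fix i j
    have "(X $ i $ j)^2 = ?m * (v i \<bullet> w j)^2" by (simp add: Xe power_mult_distrib)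
    also have "\<dots> = ?m * c^2" using c by (metis power2_abs)
    also have "\<dots> = 1" using cc by simp
    finally show "X $ i $ j = 1 \<or> X $ i $ j = -1" by (simp add: power2_eq_1_iff)
  qed
  show "X ** transpose X ** X = (?k * ?l / ?m) *\<^sub>R X"
  proof -
    have "X ** transpose X ** X = (sqrt ?m * sqrt ?m * sqrt ?m) *\<^sub>R (?D ** transpose ?D ** ?D)"
      by (simp add: X_def transpose_scalar smult_left smult_right)
    also have "\<dots> = (?k * ?l / ?m) *\<^sub>R X" using m0
      by (simp add: DDD X_def field_simps)
    finally show ?thesis .
  qed
  show "X ** transpose X = ?l *\<^sub>R (transpose ?V ** ?V)"
    by (simp add: X_def transpose_scalar smult_left smult_right DDt sm2)
  show "transpose X ** X = ?k *\<^sub>R (transpose ?W ** ?W)"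
    by (simp add: X_def transpose_scalar smult_left smult_right DtD sm2)
  show "rank X = CARD('m)"
  proof -
    have rX: "rank X = rank ?D" unfolding X_def by (rule rank_scaleR) simp
    have "rank ?D \<le> rank ?W" by (rule rank_mul_le_right)
    also have "\<dots> \<le> CARD('m)" using rank_bound[of ?W] by simp
    finally have 1: "rank ?D \<le> CARD('m)" .
    have "?V ** ?D ** transpose ?W = (?k / ?m * (?l / ?m)) *\<^sub>R mat 1"
      by (simp add: matrix_mul_assoc TV TW smult_left smult_right)
    hence "rank (?V ** ?D ** transpose ?W) = CARD('m)"
      by (simp add: rank_scaleR rank_I)
    moreover have "rank (?V ** ?D ** transpose ?W) \<le> rank ?D"
      by (metis rank_mul_le_left rank_mul_le_right order_trans)
    ultimately show ?thesis using 1 rX by simp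
  qed
qed

lemma mv_axis: "((A::real^'n^'m) *v axis j 1) $ i = A $ i $ j"
  by (simp add: matrix_vector_mult_basis column_def)

lemma mv_inner: "((A::real^'n^'m) *v x) \<bullet> y = x \<bullet> (transpose A *v y)"
  by (metis dot_lmul_matrix vector_transpose_matrix)

lemma smult_mv: "((c::real) *\<^sub>R (A::real^'n^'m)) *v x = c *\<^sub>R (A *v x)"
  by (simp add: vec_eq_iff matrix_vector_mult_def sum_distrib_left mult.assoc)

lemma colsum: "(\<Sum>i\<in>UNIV. (s $ i) *\<^sub>R ((A::real^'n^'m) *v axis i 1)) = A *v s"
proof -
  have "(\<Sum>i\<in>UNIV. (s $ i) *\<^sub>R ((A::real^'n^'m) *v axis i 1)) $ r = (A *v s) $ r" for r
  proof -
    have "(\<Sum>i\<in>UNIV. (s $ i) *\<^sub>R (A *v axis i 1)) $ r = (\<Sum>i\<in>UNIV. s $ i * A $ r $ i)"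
      by (simp add: sum_component mv_axis)
    also have "\<dots> = (A *v s) $ r" by (simp add: matrix_vector_mult_def mult.commute)
    finally show ?thesis .
  qed
  thus ?thesis by (simp add: vec_eq_iff)
qed

lemma backward:
  fixes X :: "real^'l::finite^'k::finite"
  assumes pm: "\<forall>i j. X $ i $ j = 1 \<or> X $ i $ j = -1"
    and aX: "X ** transpose X ** X = a *\<^sub>R X"
    and cG: "\<forall>i i'. i \<noteq> i' \<longrightarrow> \<bar>(X ** transpose X) $ i $ i'\<bar> = cg"
    and cH: "\<forall>j j'. j \<noteq> j' \<longrightarrow> \<bar>(transpose X ** X) $ j $ j'\<bar> = ch"
    and r: "rank X = CARD('m::finite)"
  shows "\<exists>(v :: 'k \<Rightarrow> real^'m) (w :: 'l \<Rightarrow> real^'m). is_ETF v \<and> is_ETF w \<and> mutually_unbiased v w"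
proof -
  let ?k = "real CARD('k)" let ?l = "real CARD('l)" let ?m = "real CARD('m)"
  define S where "S = range (\<lambda>x. X *v x)"
  have subS: "subspace S" unfolding S_def
    by (simp add: matrix_vector_mul_linear subspace_UNIV linear_subspace_image)
  have dS: "dim S = dim (UNIV :: (real^'m) set)"
    using r by (simp add: S_def rank_dim_range)
  obtain f :: "real^'k \<Rightarrow> real^'m" where lin: "linear f" and fS: "f ` S = UNIV"
    and fn: "\<And>x. x \<in> S \<Longrightarrow> norm (f x) = norm x"
    using isometry_subspaces[OF subS subspace_UNIV dS] by metis
  have fi: "f x \<bullet> f y = x \<bullet> y" if "x \<in> S" "y \<in> S" for x y
  proof -
    have "norm (f (x + y)) = norm (x + y)" using that subS by (simp add: fn subspace_add)
    hence "norm (f x + f y)^2 = norm (x + y)^2" by (simp add: linear_add[OF lin])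
    moreover have "norm (f x)^2 = norm x^2" "norm (f y)^2 = norm y^2" using that fn by auto
    ultimately show ?thesis
      by (simp add: power2_norm_eq_inner inner_add inner_commute)
  qed
  define G where "G = X ** transpose X"
  have Gt: "transpose G = G" by (simp add: G_def matrix_transpose_mul)
  have GS: "G *v s = a *\<^sub>R s" if "s \<in> S" for s
  proof -
    from that obtain t where t: "s = X *v t" by (auto simp: S_def)
    have "G *v s = (G ** X) *v t" by (simp add: t matrix_vector_mul_assoc)
    also have "\<dots> = a *\<^sub>R s" by (simp add: G_def aX smult_mv t)
    finally show ?thesis .
  qed
  have XS: "X *v x \<in> S" for x by (simp add: S_def)
  have X2: "X $ i $ j * X $ i $ j = 1" for i j using pm by (metis mult_minus_left mult_1 minus_minus)
  have Gd: "G $ i $ i = ?l" for i by (simp add: G_def mm_entry tr_entry X2)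
  define u where "u i = G *v axis i 1" for i
  have uS: "u i \<in> S" for i
    by (simp add: u_def G_def matrix_vector_mul_assoc[symmetric] XS)
  have ue: "u i $ i' = G $ i' $ i" for i i' by (simp add: u_def mv_axis)
  have K0: "u i \<bullet> s = a * s $ i" if "s \<in> S" for i s
    by (simp add: u_def mv_inner Gt GS that inner_axis')
  obtain i0 :: 'k where True by blast
  have l0: "?l > 0" by simp
  have apos: "a > 0"
  proof -
    have "u i0 \<bullet> u i0 = a * ?l" using K0[OF uS] by (simp add: ue Gd)
    hence n2: "norm (u i0)^2 = a * ?l" by (simp add: power2_norm_eq_inner)
    have "\<bar>u i0 $ i0\<bar> \<le> norm (u i0)" by (rule component_le_norm_cart)
    hence "?l \<le> norm (u i0)" by (simp add: ue Gd)
    hence "?l^2 \<le> norm (u i0)^2" using l0 by (simp add: power_mono)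
    hence "?l * ?l \<le> a * ?l" using n2 by (simp add: power2_eq_square)
    thus ?thesis using l0 by (metis mult_le_cancel_right_pos less_le_trans)
  qed
  define \<alpha> where "\<alpha> = 1 / sqrt (a * ?l)"
  define \<beta> where "\<beta> = 1 / sqrt ?k"
  have al2: "\<alpha> * \<alpha> = 1 / (a * ?l)" using apos l0 by (simp add: \<alpha>_def)
  have be2: "\<beta> * \<beta> = 1 / ?k" by (simp add: \<beta>_def)
  have alpos: "\<alpha> > 0" "\<beta> > 0" using apos l0 by (auto simp: \<alpha>_def \<beta>_def)
  define col where "col j = X *v axis j 1" for j
  have colS: "col j \<in> S" for j by (simp add: col_def XS)
  have cole: "col j $ i = X $ i $ j" for i j by (simp add: col_def mv_axis)
  have colin: "col j \<bullet> col j' = (transpose X ** X) $ j $ j'" for j j'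
    by (simp add: inner_vec_def cole mm_entry tr_entry)
  have colin2: "col j \<bullet> s = (transpose X *v s) $ j" for j s
    by (simp add: col_def mv_inner inner_axis')
  define v where "v i = \<alpha> *\<^sub>R f (u i)" for i
  define w where "w j = \<beta> *\<^sub>R f (col j)" for j
  have Kv: "v i \<bullet> f s = \<alpha> * a * s $ i" if "s \<in> S" for i s
    using that by (simp add: v_def fi uS K0)
  have Kw: "w j \<bullet> f s = \<beta> * (col j \<bullet> s)" if "s \<in> S" for j s
    using that by (simp add: w_def fi colS)
  have vv: "v i \<bullet> v i' = \<alpha> * \<alpha> * a * G $ i $ i'" for i i'
  proof -
    have "v i \<bullet> v i' = \<alpha> * (v i \<bullet> f (u i'))" by (simp add: v_def)
    also have "\<dots> = \<alpha> * \<alpha> * a * G $ i $ i'" by (simp add: Kv uS ue)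
    finally show ?thesis .
  qed
  have ww: "w j \<bullet> w j' = \<beta> * \<beta> * (transpose X ** X) $ j $ j'" for j j'
  proof -
    have "w j \<bullet> w j' = \<beta> * (w j \<bullet> f (col j'))" by (simp add: w_def)
    also have "\<dots> = \<beta> * \<beta> * (transpose X ** X) $ j $ j'" by (simp add: Kw colS colin)
    finally show ?thesis .
  qed
  have vw: "v i \<bullet> w j = \<alpha> * \<beta> * a * X $ i $ j" for i j
  proof -
    have "v i \<bullet> w j = \<beta> * (v i \<bullet> f (col j))" by (simp add: w_def)
    also have "\<dots> = \<alpha> * \<beta> * a * X $ i $ j" by (simp add: Kv colS cole)
    finally show ?thesis .
  qed
  have nv: "norm (v i) = 1" for i
  proof -
    have "v i \<bullet> v i = 1" using apos l0 by (simp add: vv Gd al2)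
    thus ?thesis by (simp add: norm_eq_sqrt_inner)
  qed
  have nw: "norm (w j) = 1" for j
  proof -
    have "(transpose X ** X) $ j $ j = ?k" by (simp add: mm_entry tr_entry X2 mult.commute)
    hence "w j \<bullet> w j = 1" by (simp add: ww be2)
    thus ?thesis by (simp add: norm_eq_sqrt_inner)
  qed
  have surjf: "\<exists>s\<in>S. y = f s" for y using fS by (metis UNIV_I imageE)
  have Tv: "synth v ** transpose (synth v) = (a / ?l) *\<^sub>R mat 1"
  proof (rule tight_lemma)
    fix y
    obtain s where s: "s \<in> S" "y = f s" using surjf by blast
    have "(\<Sum>i\<in>UNIV. (v i \<bullet> y) *\<^sub>R v i) = (\<Sum>i\<in>UNIV. (\<alpha> * a * \<alpha>) *\<^sub>R f (s $ i *\<^sub>R u i))"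
      unfolding s(2) Kv[OF s(1)] by (simp add: v_def linear_scale[OF lin] mult_ac)
    also have "\<dots> = (\<alpha> * a * \<alpha>) *\<^sub>R f (\<Sum>i\<in>UNIV. s $ i *\<^sub>R u i)"
      by (simp add: linear_sum[OF lin] scaleR_sum_right)
    also have "(\<Sum>i\<in>UNIV. s $ i *\<^sub>R u i) = G *v s" by (simp add: u_def colsum)
    also have "\<dots> = a *\<^sub>R s" using s by (simp add: GS)
    also have "(\<alpha> * a * \<alpha>) *\<^sub>R f (a *\<^sub>R s) = (a / ?l) *\<^sub>R y"
    proof -
      have cf: "\<alpha> * a * \<alpha> * a = a / ?l"
      proof -
        have "\<alpha> * a * \<alpha> * a = (\<alpha> * \<alpha>) * (a * a)" by (simp add: mult_ac)
        also have "\<dots> = a / ?l" using al2 apos by (simp add: field_simps)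
        finally show ?thesis .
      qed
      show ?thesis by (simp only: linear_scale[OF lin] scaleR_scaleR cf s(2))
    qed
    finally show "(\<Sum>i\<in>UNIV. (v i \<bullet> y) *\<^sub>R v i) = (a / ?l) *\<^sub>R y" .
  qed
  have Tw: "synth w ** transpose (synth w) = (a / ?k) *\<^sub>R mat 1"
  proof (rule tight_lemma)
    fix y
    obtain s where s: "s \<in> S" "y = f s" using surjf by blast
    have "(\<Sum>j\<in>UNIV. (w j \<bullet> y) *\<^sub>R w j) = (\<Sum>j\<in>UNIV. (\<beta> * \<beta>) *\<^sub>R f ((transpose X *v s) $ j *\<^sub>R col j))"
      unfolding s(2) Kw[OF s(1)] by (simp add: w_def linear_scale[OF lin] colin2 mult_ac)
    also have "\<dots> = (\<beta> * \<beta>) *\<^sub>R f (\<Sum>j\<in>UNIV. (transpose X *v s) $ j *\<^sub>R col j)"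
      by (simp add: linear_sum[OF lin] scaleR_sum_right)
    also have "(\<Sum>j\<in>UNIV. (transpose X *v s) $ j *\<^sub>R col j) = X *v (transpose X *v s)"
      by (simp add: col_def colsum)
    also have "\<dots> = G *v s" by (simp only: G_def matrix_vector_mul_assoc)
    also have "\<dots> = a *\<^sub>R s" using s by (simp add: GS)
    also have "(\<beta> * \<beta>) *\<^sub>R f (a *\<^sub>R s) = (a / ?k) *\<^sub>R y"
    proof -
      have cf: "\<beta> * \<beta> * a = a / ?k" using be2 by simp
      show ?thesis by (simp only: linear_scale[OF lin] scaleR_scaleR cf s(2))
    qed
    finally show "(\<Sum>j\<in>UNIV. (w j \<bullet> y) *\<^sub>R w j) = (a / ?k) *\<^sub>R y" .
  qed
  have ak: "a / ?l = ?k / ?m" using trace_lemma[OF Tv nv] by (simp add: field_simps)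
  have al: "a / ?k = ?l / ?m" using trace_lemma[OF Tw nw] by (simp add: field_simps)
  have "is_ETF v"
    unfolding is_ETF_def
  proof (intro conjI)
    show "\<forall>i. norm (v i) = 1" using nv by blast
    show "\<exists>c. \<forall>i j. i \<noteq> j \<longrightarrow> \<bar>v i \<bullet> v j\<bar> = c"
      using cG apos by (intro exI[of _ "\<alpha> * \<alpha> * a * cg"]) (simp add: vv G_def abs_mult)
    show "synth v ** transpose (synth v) = (?k / ?m) *\<^sub>R mat 1" using Tv ak by simp
  qed
  moreover have "is_ETF w"
    unfolding is_ETF_def
  proof (intro conjI)
    show "\<forall>i. norm (w i) = 1" using nw by blast
    show "\<exists>c. \<forall>i j. i \<noteq> j \<longrightarrow> \<bar>w i \<bullet> w j\<bar> = c"
      using cH by (intro exI[of _ "\<beta> * \<beta> * ch"]) (simp add: ww abs_mult)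
    show "synth w ** transpose (synth w) = (?l / ?m) *\<^sub>R mat 1" using Tw al by simp
  qed
  moreover have "mutually_unbiased v w"
    unfolding mutually_unbiased_def
  proof (intro exI allI)
    fix i j
    have "\<bar>X $ i $ j\<bar> = 1" using pm by (metis abs_1 abs_minus)
    thus "\<bar>v i \<bullet> w j\<bar> = \<alpha> * \<beta> * a" using alpos apos by (simp add: vw abs_mult)
  qed
  ultimately show ?thesis by blast
qed

lemma int_mm:
  assumes "\<And>i j. (A::real^'n^'m) $ i $ j \<in> \<int>" "\<And>i j. (B::real^'p^'n) $ i $ j \<in> \<int>"
  shows "(A ** B) $ i $ j \<in> \<int>"
  using assms by (simp add: mm_entry Ints_mult Ints_sum)

lemma two_elems:
  assumes "CARD('a::finite) \<ge> 2"
  obtains x y :: "'a::finite" where "x \<noteq> y"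
proof -
  obtain x :: 'a where True by blast
  show ?thesis
  proof (cases "\<exists>y::'a. y \<noteq> x")
    case True thus ?thesis using that by blast
  next
    case False
    hence U: "(UNIV::'a set) = {x}" by auto
    have "card (UNIV::'a set) = card {x}" by (simp only: U)
    hence "CARD('a) = 1" by simp
    with assms show ?thesis by simp
  qed
qed

theorem proposition2:
  assumes "CARD('m::finite) > 1"
    and "CARD('k::finite) \<ge> CARD('m)"
    and "CARD('l::finite) \<ge> CARD('m)"
  shows "((\<exists>(v :: 'k \<Rightarrow> real^'m) (w :: 'l \<Rightarrow> real^'m).
              is_ETF v \<and> is_ETF w \<and> mutually_unbiased v w)
          \<longleftrightarrow>
          (\<exists>X :: real^'l^'k.
              (\<forall>i j. X $ i $ j = 1 \<or> X $ i $ j = -1) \<and>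
              (\<exists>a. X ** transpose X ** X = a *\<^sub>R X) \<and>
              (\<exists>c. \<forall>i i'. i \<noteq> i' \<longrightarrow> \<bar>(X ** transpose X) $ i $ i'\<bar> = c) \<and>
              (\<exists>c. \<forall>j j'. j \<noteq> j' \<longrightarrow> \<bar>(transpose X ** X) $ j $ j'\<bar> = c) \<and>
              rank X = CARD('m)))
       \<and> ((\<exists>(v :: 'k \<Rightarrow> real^'m) (w :: 'l \<Rightarrow> real^'m).
              is_ETF v \<and> is_ETF w \<and> mutually_unbiased v w) \<longrightarrow>
            (let k = real CARD('k); l = real CARD('l); m = real CARD('m) in
              k * l / m \<in> \<int> \<and>
              k * sqrt ((l - m) / (m * (l - 1))) \<in> \<int> \<and>
              l * sqrt ((k - m) / (m * (k - 1))) \<in> \<int>))"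
proof (intro conjI iffI impI)
  assume "\<exists>(v :: 'k \<Rightarrow> real^'m) (w :: 'l \<Rightarrow> real^'m). is_ETF v \<and> is_ETF w \<and> mutually_unbiased v w"
  then obtain v :: "'k \<Rightarrow> real^'m" and w :: "'l \<Rightarrow> real^'m" where
    ev: "is_ETF v" and ew: "is_ETF w" and mu: "mutually_unbiased v w" by blast
  define X where "X = sqrt (real CARD('m)) *\<^sub>R (transpose (synth v) ** synth w)"
  note F = forward[OF ev ew mu, folded X_def]
  from ev obtain cv where cv: "\<And>i j. i \<noteq> j \<Longrightarrow> \<bar>v i \<bullet> v j\<bar> = cv" unfolding is_ETF_def by blast
  from ew obtain cw where cw: "\<And>i j. i \<noteq> j \<Longrightarrow> \<bar>w i \<bullet> w j\<bar> = cw" unfolding is_ETF_def by blast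
  show "\<exists>X :: real^'l^'k.
              (\<forall>i j. X $ i $ j = 1 \<or> X $ i $ j = -1) \<and>
              (\<exists>a. X ** transpose X ** X = a *\<^sub>R X) \<and>
              (\<exists>c. \<forall>i i'. i \<noteq> i' \<longrightarrow> \<bar>(X ** transpose X) $ i $ i'\<bar> = c) \<and>
              (\<exists>c. \<forall>j j'. j \<noteq> j' \<longrightarrow> \<bar>(transpose X ** X) $ j $ j'\<bar> = c) \<and>
              rank X = CARD('m)"
  proof (intro exI conjI)
    show "\<forall>i j. X $ i $ j = 1 \<or> X $ i $ j = -1" by (rule F(1))
    show "X ** transpose X ** X = (real CARD('k) * real CARD('l) / real CARD('m)) *\<^sub>R X" by (rule F(2))
    show "\<forall>i i'. i \<noteq> i' \<longrightarrow> \<bar>(X ** transpose X) $ i $ i'\<bar> = real CARD('l) * cv"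
      by (simp add: F(3) gram_entry abs_mult cv)
    show "\<forall>j j'. j \<noteq> j' \<longrightarrow> \<bar>(transpose X ** X) $ j $ j'\<bar> = real CARD('k) * cw"
      by (simp add: F(4) gram_entry abs_mult cw)
    show "rank X = CARD('m)" by (rule F(5))
  qed
next
  assume "\<exists>X :: real^'l^'k.
              (\<forall>i j. X $ i $ j = 1 \<or> X $ i $ j = -1) \<and>
              (\<exists>a. X ** transpose X ** X = a *\<^sub>R X) \<and>
              (\<exists>c. \<forall>i i'. i \<noteq> i' \<longrightarrow> \<bar>(X ** transpose X) $ i $ i'\<bar> = c) \<and>
              (\<exists>c. \<forall>j j'. j \<noteq> j' \<longrightarrow> \<bar>(transpose X ** X) $ j $ j'\<bar> = c) \<and>
              rank X = CARD('m)"
  then obtain X :: "real^'l^'k" and a cg ch where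
    "\<forall>i j. X $ i $ j = 1 \<or> X $ i $ j = -1" "X ** transpose X ** X = a *\<^sub>R X"
    "\<forall>i i'. i \<noteq> i' \<longrightarrow> \<bar>(X ** transpose X) $ i $ i'\<bar> = cg"
    "\<forall>j j'. j \<noteq> j' \<longrightarrow> \<bar>(transpose X ** X) $ j $ j'\<bar> = ch"
    "rank X = CARD('m)" by blast
  then show "\<exists>(v :: 'k \<Rightarrow> real^'m) (w :: 'l \<Rightarrow> real^'m). is_ETF v \<and> is_ETF w \<and> mutually_unbiased v w"
    by (rule backward)
next
  assume "\<exists>(v :: 'k \<Rightarrow> real^'m) (w :: 'l \<Rightarrow> real^'m). is_ETF v \<and> is_ETF w \<and> mutually_unbiased v w"
  then obtain v :: "'k \<Rightarrow> real^'m" and w :: "'l \<Rightarrow> real^'m" where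
    ev: "is_ETF v" and ew: "is_ETF w" and mu: "mutually_unbiased v w" by blast
  define X where "X = sqrt (real CARD('m)) *\<^sub>R (transpose (synth v) ** synth w)"
  note F = forward[OF ev ew mu, folded X_def]
  let ?k = "real CARD('k)" let ?l = "real CARD('l)" let ?m = "real CARD('m)"
  have Xi: "X $ i $ j \<in> \<int>" for i j using F(1) by (metis Ints_1 Ints_minus)
  have X2: "X $ i $ j * X $ i $ j = 1" for i j using F(1) by (metis mult_minus_left mult_1 minus_minus)
  have XtI: "transpose X $ i $ j \<in> \<int>" for i j by (simp add: tr_entry Xi)
  have GI: "(X ** transpose X) $ i $ j \<in> \<int>" for i j by (rule int_mm[OF Xi XtI])
  have HI: "(transpose X ** X) $ i $ j \<in> \<int>" for i j by (rule int_mm[OF XtI Xi])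
  have GXI: "(X ** transpose X ** X) $ i $ j \<in> \<int>" for i j by (rule int_mm[OF GI Xi])
  have 1: "?k * ?l / ?m \<in> \<int>"
  proof -
    obtain i :: 'k and j :: 'l where True by blast
    have "(X ** transpose X ** X) $ i $ j * X $ i $ j = ?k * ?l / ?m"
      by (simp add: F(2) X2 mult.assoc)
    thus ?thesis using GXI Xi by (metis Ints_mult)
  qed
  have 2: "?k * sqrt ((?l - ?m) / (?m * (?l - 1))) \<in> \<int>"
  proof -
    have "CARD('l) \<ge> 2" using assms by simp
    then obtain j j' :: 'l where jj: "j \<noteq> j'" by (rule two_elems)
    have "\<bar>(transpose X ** X) $ j $ j'\<bar> = ?k * sqrt ((?l - ?m) / (?m * (?l - 1)))"
      by (simp add: F(4) gram_entry abs_mult welch[OF ew jj])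
    thus ?thesis using HI by (metis Ints_abs)
  qed
  have 3: "?l * sqrt ((?k - ?m) / (?m * (?k - 1))) \<in> \<int>"
  proof -
    have "CARD('k) \<ge> 2" using assms by simp
    then obtain i i' :: 'k where ii: "i \<noteq> i'" by (rule two_elems)
    have "\<bar>(X ** transpose X) $ i $ i'\<bar> = ?l * sqrt ((?k - ?m) / (?m * (?k - 1)))"
      by (simp add: F(3) gram_entry abs_mult welch[OF ev ii])
    thus ?thesis using GI by (metis Ints_abs)
  qed
  show "let k = ?k; l = ?l; m = ?m in
              k * l / m \<in> \<int> \<and>
              k * sqrt ((l - m) / (m * (l - 1))) \<in> \<int> \<and>
              l * sqrt ((k - m) / (m * (k - 1))) \<in> \<int>"
    using 1 2 3 by (simp add: Let_def)
qed

end
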